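(* Let $T$ be a set of SGD iterations with $T\subseteq\{s:s\ge\tau\}$, where Assumption 1 holds with constants $\tau,\gamma$, let $t\in T$, and let $\mathcal R_{\mathbf x}$ be a linear region of $f^{(t)}$. Suppose there exists $\mathbf k\in\mathbb R^{|T|}$ such that $$\prod_{l=d-1}^{1}[\mathbf S_l^{(t)}(\mathbf x)](i_l,i_l)=\sum_{k\in T}\mathbf k(k)\prod_{l=d-1}^{1}[\mathbf S_l^{(k)}(\mathbf x^{(k)})](i_l,i_l)$$ for all $i_l\in\{1,\dots,n_l\}$, $l=1,\dots,d-1$. Then $f^{(t)}$ is Lipschitz on $\mathcal R_{\mathbf x}$ with $$\lambda_{f^{(t)}}(\mathcal R_{\mathbf x})\le(1+\gamma)\sum_{k\in T}|\mathbf k(k)|\,\frac{|\mathbf S_d^{(t)}(\mathbf x)|}{|\mathbf S_d^{(t)}(\mathbf x^{(k)})|}\,\lambda_{f^{(k)}}(\mathcal R_{\mathbf x^{(k)}}),$$ where $\mathbf S_d^{(t)}(\mathbf z)=\rho_d'(u)$ evaluated at $u=\mathbf W_d^{(t)}f_{d-1}^{(t)}\circ\cdots\circ f_1^{(t)}(\mathbf z)+\mathbf b_d^{(t)}$.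
   Context: Network: $f(\mathbf x,\mathbf w)=f_d\circ\cdots\circ f_1(\mathbf x)$ with $f_l(\mathbf x)=\rho_l(\mathbf W_l\mathbf x+\mathbf b_l)$, $\mathbf W_l\in\mathbb R^{n_l\times n_{l-1}}$, $n_0=n$, $n_d=1$; $\rho_l$ ReLU for $l<d$, $\rho_d$ identity or sigmoid. SGD on training set $X$: at iteration $s$ a point $\mathbf x^{(s)}\in X$ is sampled and parameters updated by a gradient step; $f^{(s)}$ is the network with parameters $\mathbf W_l^{(s)},\mathbf b_l^{(s)}$. Activation matrices $\mathbf S_l^{(s)}(\mathbf x)=\mathrm{diag}(\mathbb 1[f_l\circ\cdots\circ f_1(\mathbf x,\mathbf w^{(s)})>0])$ for $l<d$. Local Lipschitz constant on the linear region $\mathcal R_{\mathbf x}$: $\lambda_{f^{(s)}}(\mathcal R_{\mathbf x}):=\|\mathbf S_d^{(s)}(\mathbf x)\mathbf W_d^{(s)}\mathbf S_{d-1}^{(s)}(\mathbf x)\cdots\mathbf S_1^{(s)}(\mathbf x)\mathbf W_1^{(s)}\|_2$. Activation vector $\mathbf s_s(\mathbf x):=\bigotimes_{l=d-1}^1\mathrm{diag}(\mathbf S_l^{(s)}(\mathbf x))$. Assumption 1: there exist $\tau,\gamma>0$ such that $\mathbf s_s(\mathbf x)=\mathbf s_{s'}(\mathbf x)$ and $\lambda_{f^{(s)}}(\mathcal R_{\mathbf x})\le(1+\gamma)\lambda_{f^{(s')}}(\mathcal R_{\mathbf x})$ for all $\mathbf x\in X$ and $s,s'\ge\tau$. *)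

theory Defs
  imports "HOL-Analysis.Analysis"
begin

text \<open>Vectors in R^m are functions nat => real, only entries 0..m-1 matter.
  Per-iteration parameters: W :: layer => row => column => real (layer l in 1..d,
  row < n l, column < n (l-1)), b :: layer => row => real.
  Iteration-indexed parameters are functions of the iteration number s.\<close>

definition relu :: "real \<Rightarrow> real" where
  "relu u = max 0 u"

definition sigmoid :: "real \<Rightarrow> real" where
  "sigmoid u = 1 / (1 + exp (- u))"

fun hid :: "(nat \<Rightarrow> nat) \<Rightarrow> (nat \<Rightarrow> nat \<Rightarrow> nat \<Rightarrow> real) \<Rightarrow> (nat \<Rightarrow> nat \<Rightarrow> real)
             \<Rightarrow> nat \<Rightarrow> (nat \<Rightarrow> real) \<Rightarrow> nat \<Rightarrow> real" where
  "hid n W b 0 x = x"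
| "hid n W b (Suc l) x =
     (\<lambda>i. relu ((\<Sum>j<n l. W (Suc l) i j * hid n W b l x j) + b (Suc l) i))"

text \<open>Diagonal entry (i,i) of the activation matrix S_l(x), for 1 <= l <= d-1.\<close>
definition S_hid :: "(nat \<Rightarrow> nat) \<Rightarrow> (nat \<Rightarrow> nat \<Rightarrow> nat \<Rightarrow> real) \<Rightarrow> (nat \<Rightarrow> nat \<Rightarrow> real)
             \<Rightarrow> nat \<Rightarrow> (nat \<Rightarrow> real) \<Rightarrow> nat \<Rightarrow> real" where
  "S_hid n W b l x i = (if hid n W b l x i > 0 then 1 else 0)"

text \<open>S_d(x) = rho_d'(u), u = W_d f_{d-1} o ... o f_1(x) + b_d (a scalar, n_d = 1).\<close>
definition S_out :: "(real \<Rightarrow> real) \<Rightarrow> (nat \<Rightarrow> nat) \<Rightarrow> nat \<Rightarrow> (nat \<Rightarrow> nat \<Rightarrow> nat \<Rightarrow> real)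
             \<Rightarrow> (nat \<Rightarrow> nat \<Rightarrow> real) \<Rightarrow> (nat \<Rightarrow> real) \<Rightarrow> real" where
  "S_out rho n d W b x =
     deriv rho ((\<Sum>j<n (d - 1). W d 0 j * hid n W b (d - 1) x j) + b d 0)"

text \<open>jac .. l x = S_l W_l S_{l-1} ... S_1 W_1 (an n_l x n_0 matrix), with S_d = S_out.\<close>
fun jac :: "(real \<Rightarrow> real) \<Rightarrow> (nat \<Rightarrow> nat) \<Rightarrow> nat \<Rightarrow> (nat \<Rightarrow> nat \<Rightarrow> nat \<Rightarrow> real)
             \<Rightarrow> (nat \<Rightarrow> nat \<Rightarrow> real) \<Rightarrow> (nat \<Rightarrow> real) \<Rightarrow> nat \<Rightarrow> nat \<Rightarrow> nat \<Rightarrow> real" where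
  "jac rho n d W b x 0 = (\<lambda>i j. if i = j then 1 else 0)"
| "jac rho n d W b x (Suc l) =
     (\<lambda>i j. (if Suc l = d then S_out rho n d W b x else S_hid n W b (Suc l) x i)
            * (\<Sum>m<n l. W (Suc l) i m * jac rho n d W b x l m j))"

definition op2norm :: "nat \<Rightarrow> nat \<Rightarrow> (nat \<Rightarrow> nat \<Rightarrow> real) \<Rightarrow> real" where
  "op2norm p q A = Sup {sqrt (\<Sum>i<p. (\<Sum>j<q. A i j * v j)\<^sup>2) | v. (\<Sum>j<q. (v j)\<^sup>2) \<le> 1}"

text \<open>Local Lipschitz constant lambda_f(R_x) = || S_d W_d S_{d-1} ... S_1 W_1 ||_2.\<close>
definition lip :: "(real \<Rightarrow> real) \<Rightarrow> (nat \<Rightarrow> nat) \<Rightarrow> nat \<Rightarrow> (nat \<Rightarrow> nat \<Rightarrow> nat \<Rightarrow> real)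
             \<Rightarrow> (nat \<Rightarrow> nat \<Rightarrow> real) \<Rightarrow> (nat \<Rightarrow> real) \<Rightarrow> real" where
  "lip rho n d W b x = op2norm (n d) (n 0) (jac rho n d W b x d)"

text \<open>Index tuples (i_1,...,i_{d-1}) with i_l < n_l, and the corresponding entry of the
  Kronecker-product activation vector s(x) = (x)_{l=d-1}^{1} diag(S_l(x)).\<close>
definition valid_idx :: "(nat \<Rightarrow> nat) \<Rightarrow> nat \<Rightarrow> (nat \<Rightarrow> nat) \<Rightarrow> bool" where
  "valid_idx n d idx \<longleftrightarrow> (\<forall>l\<in>{1..<d}. idx l < n l)"

definition actprod :: "(nat \<Rightarrow> nat) \<Rightarrow> nat \<Rightarrow> (nat \<Rightarrow> nat \<Rightarrow> nat \<Rightarrow> real)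
             \<Rightarrow> (nat \<Rightarrow> nat \<Rightarrow> real) \<Rightarrow> (nat \<Rightarrow> real) \<Rightarrow> (nat \<Rightarrow> nat) \<Rightarrow> real" where
  "actprod n d W b x idx = (\<Prod>l\<in>{1..<d}. S_hid n W b l x (idx l))"

definition assumption1 :: "(real \<Rightarrow> real) \<Rightarrow> (nat \<Rightarrow> nat) \<Rightarrow> nat
      \<Rightarrow> (nat \<Rightarrow> nat \<Rightarrow> nat \<Rightarrow> nat \<Rightarrow> real) \<Rightarrow> (nat \<Rightarrow> nat \<Rightarrow> nat \<Rightarrow> real)
      \<Rightarrow> (nat \<Rightarrow> real) set \<Rightarrow> nat \<Rightarrow> real \<Rightarrow> bool" where
  "assumption1 rho n d Ws bs X \<tau> \<gamma> \<longleftrightarrow> \<tau> > 0 \<and> \<gamma> > 0 \<and>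
     (\<forall>x\<in>X. \<forall>s s'. \<tau> \<le> s \<longrightarrow> \<tau> \<le> s' \<longrightarrow>
        (\<forall>idx. valid_idx n d idx \<longrightarrow>
            actprod n d (Ws s) (bs s) x idx = actprod n d (Ws s') (bs s') x idx) \<and>
        lip rho n d (Ws s) (bs s) x \<le> (1 + \<gamma>) * lip rho n d (Ws s') (bs s') x)"

end

theory Submission
  imports Defs
begin

fun G :: "(nat\<Rightarrow>nat) \<Rightarrow> (nat\<Rightarrow>nat\<Rightarrow>nat\<Rightarrow>real) \<Rightarrow> (nat\<Rightarrow>nat\<Rightarrow>real) \<Rightarrow> nat \<Rightarrow> nat\<Rightarrow>nat\<Rightarrow>real" where
  "G n W D 0 = (\<lambda>i j. if i=j then 1 else 0)"
| "G n W D (Suc l) = (\<lambda>i j. D (Suc l) i * (\<Sum>m<n l. W (Suc l) i m * G n W D l m j))"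

lemma G_lin:
  assumes "finite K"
    and "\<forall>idx. (\<forall>l'\<in>{1..l}. idx l' < n l') \<longrightarrow> (\<Sum>k\<in>K. c k * (\<Prod>l'\<in>{1..l}. D k l' (idx l'))) = 0"
  shows "\<forall>i<n l. \<forall>j. (\<Sum>k\<in>K. c k * G n W (D k) l i j) = 0"
  using assms(2)
proof (induction l arbitrary: c)
  case 0
  then have s: "(\<Sum>k\<in>K. c k) = 0"
    by (drule_tac x="\<lambda>_. 0" in spec) simp
  show ?case
  proof (intro allI impI)
    fix i j
    show "(\<Sum>k\<in>K. c k * G n W (D k) 0 i j) = 0"
    proof (cases "i = j")
      case True then show ?thesis using s by simp
    qed simp
  qed
next
  case (Suc l)
  show ?case
  proof (intro allI impI)
    fix i j assume i: "i < n (Suc l)"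
    define c' where "c' k = c k * D k (Suc l) i" for k
    have "\<forall>idx. (\<forall>l'\<in>{1..l}. idx l' < n l') \<longrightarrow> (\<Sum>k\<in>K. c' k * (\<Prod>l'\<in>{1..l}. D k l' (idx l'))) = 0"
    proof (intro allI impI)
      fix idx assume v: "\<forall>l'\<in>{1..l}. idx l' < n l'"
      define idx' where "idx' = idx(Suc l := i)"
      have v': "\<forall>l'\<in>{1..Suc l}. idx' l' < n l'" using v i unfolding idx'_def
        by (auto simp: le_Suc_eq)
      have p: "(\<Prod>l'\<in>{1..Suc l}. D k l' (idx' l')) = D k (Suc l) i * (\<Prod>l'\<in>{1..l}. D k l' (idx l'))" for k
      proof -
        have "(\<Prod>l'\<in>{1..Suc l}. D k l' (idx' l')) = D k (Suc l) (idx' (Suc l)) * (\<Prod>l'\<in>{1..l}. D k l' (idx' l'))"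
          by (simp add: prod.cl_ivl_Suc mult.commute)
        also have "(\<Prod>l'\<in>{1..l}. D k l' (idx' l')) = (\<Prod>l'\<in>{1..l}. D k l' (idx l'))"
          by (rule prod.cong) (auto simp: idx'_def)
        finally show ?thesis by (simp add: idx'_def)
      qed
      have "(\<Sum>k\<in>K. c k * (\<Prod>l'\<in>{1..Suc l}. D k l' (idx' l'))) = 0" using Suc.prems v' by blast
      then have "(\<Sum>k\<in>K. c k * (D k (Suc l) i * (\<Prod>l'\<in>{1..l}. D k l' (idx l')))) = 0"
        by (simp only: p)
      then show "(\<Sum>k\<in>K. c' k * (\<Prod>l'\<in>{1..l}. D k l' (idx l'))) = 0"
        by (simp add: c'_def mult.assoc)
    qed
    then have IH: "\<forall>m<n l. (\<Sum>k\<in>K. c' k * G n W (D k) l m j) = 0" using Suc.IH by blast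
    have "(\<Sum>k\<in>K. c k * G n W (D k) (Suc l) i j)
        = (\<Sum>k\<in>K. \<Sum>m<n l. W (Suc l) i m * (c' k * G n W (D k) l m j))"
      by (simp add: c'_def sum_distrib_left mult_ac)
    also have "\<dots> = (\<Sum>m<n l. W (Suc l) i m * (\<Sum>k\<in>K. c' k * G n W (D k) l m j))"
      by (subst sum.swap) (simp add: sum_distrib_left)
    also have "\<dots> = 0" using IH by simp
    finally show "(\<Sum>k\<in>K. c k * G n W (D k) (Suc l) i j) = 0" .
  qed
qed

lemma jac_G:
  "l < d \<Longrightarrow> jac rho n d W b x l = G n W (\<lambda>l i. S_hid n W b l x i) l"
  by (induction l) auto

lemma jac_d:
  assumes "d = Suc l"
  shows "jac rho n d W b x d i j = S_out rho n d W b x * (\<Sum>m<n l. W d i m * G n W (\<lambda>l i. S_hid n W b l x i) l m j)"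
  using assms jac_G[of l d rho n W b x] by simp

lemma op2norm_1:
  "op2norm (Suc 0) q A = Sup {\<bar>\<Sum>j<q. A 0 j * v j\<bar> | v. (\<Sum>j<q. (v j)\<^sup>2) \<le> 1}"
  unfolding op2norm_def by simp

lemma op2norm_bound:
  assumes "(\<Sum>j<q. (v j)\<^sup>2) \<le> 1"
  shows "\<bar>\<Sum>j<q. A 0 j * v j\<bar> \<le> op2norm (Suc 0) q A"
proof -
  have vj: "\<bar>v j\<bar> \<le> 1" if "j < q" for j
  proof -
    have "(v j)\<^sup>2 \<le> (\<Sum>j<q. (v j)\<^sup>2)"
      using that by (intro member_le_sum) auto
    then have "(v j)\<^sup>2 \<le> 1" using assms by linarith
    then show ?thesis by (simp add: abs_square_le_1)
  qed
  have "bdd_above {\<bar>\<Sum>j<q. A 0 j * v j\<bar> | v. (\<Sum>j<q. (v j)\<^sup>2) \<le> 1}"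
  proof (rule bdd_aboveI, clarify)
    fix w :: "nat \<Rightarrow> real" assume w: "(\<Sum>j<q. (w j)\<^sup>2) \<le> 1"
    have wj: "\<bar>w j\<bar> \<le> 1" if "j < q" for j
    proof -
      have "(w j)\<^sup>2 \<le> (\<Sum>j<q. (w j)\<^sup>2)"
        using that by (intro member_le_sum) auto
      then have "(w j)\<^sup>2 \<le> 1" using w by linarith
      then show ?thesis by (simp add: abs_square_le_1)
    qed
    have "\<bar>\<Sum>j<q. A 0 j * w j\<bar> \<le> (\<Sum>j<q. \<bar>A 0 j * w j\<bar>)" by (rule sum_abs)
    also have "\<dots> \<le> (\<Sum>j<q. \<bar>A 0 j\<bar>)"
      by (intro sum_mono) (use wj in \<open>auto simp: abs_mult intro: mult_left_le\<close>)
    finally show "\<bar>\<Sum>j<q. A 0 j * w j\<bar> \<le> (\<Sum>j<q. \<bar>A 0 j\<bar>)" .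
  qed
  then show ?thesis unfolding op2norm_1 using assms by (intro cSup_upper) blast+
qed

lemma op2norm_comb:
  assumes "finite K"
  shows "op2norm (Suc 0) q (\<lambda>i j. \<Sum>k\<in>K. a k * B k i j) \<le> (\<Sum>k\<in>K. \<bar>a k\<bar> * op2norm (Suc 0) q (B k))"
  unfolding op2norm_1[of q "\<lambda>i j. \<Sum>k\<in>K. a k * B k i j"]
proof (rule cSup_least)
  show "{\<bar>\<Sum>j<q. (\<Sum>k\<in>K. a k * B k 0 j) * v j\<bar> | v. (\<Sum>j<q. (v j)\<^sup>2) \<le> 1} \<noteq> {}"
    apply simp apply (rule exI[of _ "\<lambda>_. 0"]) by simp
next
  fix y assume "y \<in> {\<bar>\<Sum>j<q. (\<Sum>k\<in>K. a k * B k 0 j) * v j\<bar> | v. (\<Sum>j<q. (v j)\<^sup>2) \<le> 1}"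
  then obtain v where v: "(\<Sum>j<q. (v j)\<^sup>2) \<le> 1" and y: "y = \<bar>\<Sum>j<q. (\<Sum>k\<in>K. a k * B k 0 j) * v j\<bar>" by blast
  have "y = \<bar>\<Sum>k\<in>K. a k * (\<Sum>j<q. B k 0 j * v j)\<bar>"
    unfolding y by (simp add: sum_distrib_left sum_distrib_right mult_ac sum.swap[of _ K])
  also have "\<dots> \<le> (\<Sum>k\<in>K. \<bar>a k * (\<Sum>j<q. B k 0 j * v j)\<bar>)" by (rule sum_abs)
  also have "\<dots> \<le> (\<Sum>k\<in>K. \<bar>a k\<bar> * op2norm (Suc 0) q (B k))"
    by (intro sum_mono) (auto simp: abs_mult intro!: mult_left_mono op2norm_bound[OF v])
  finally show "y \<le> (\<Sum>k\<in>K. \<bar>a k\<bar> * op2norm (Suc 0) q (B k))" .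
qed

lemma S_out_nz:
  assumes "rho = id \<or> rho = sigmoid"
  shows "S_out rho n d W b x \<noteq> 0"
proof -
  have "deriv rho u \<noteq> 0" for u
  proof (cases "rho = id")
    case True then show ?thesis by simp
  next
    case False
    then have r: "rho = sigmoid" using assms by blast
    have "((\<lambda>u. 1 / (1 + exp (- u))) has_real_derivative (- (exp (-u) * (-1)) / (1 + exp (-u))^2)) (at u)"
      apply (rule derivative_eq_intros refl)+
      using exp_gt_zero[of "-u"] by (auto simp: power2_eq_square field_simps) (smt (verit) exp_gt_zero)
    then have "deriv sigmoid u = exp (-u) / (1 + exp (-u))^2"
      by (intro DERIV_imp_deriv) (simp add: sigmoid_def[abs_def])
    moreover have pos: "0 < 1 + exp (-u)" by (smt (verit) exp_gt_zero)
    ultimately show ?thesis using r by simp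
  qed
  then show ?thesis unfolding S_out_def by blast
qed

lemma G_lin2:
  assumes "finite T"
    and "\<forall>idx. (\<forall>l'\<in>{1..l}. idx l' < n l') \<longrightarrow> (\<Prod>l'\<in>{1..l}. D0 l' (idx l')) = (\<Sum>k\<in>T. c k * (\<Prod>l'\<in>{1..l}. D k l' (idx l')))"
  shows "\<forall>i<n l. \<forall>j. G n W D0 l i j = (\<Sum>k\<in>T. c k * G n W (D k) l i j)"
proof -
  let ?K = "insert None (Some ` T)"
  let ?c = "case_option (-1) c"
  let ?D = "case_option D0 D"
  have fin: "finite ?K" using assms(1) by simp
  have "\<forall>idx. (\<forall>l'\<in>{1..l}. idx l' < n l') \<longrightarrow> (\<Sum>k\<in>?K. ?c k * (\<Prod>l'\<in>{1..l}. ?D k l' (idx l'))) = 0"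
    using assms(1,2) by (simp add: sum.reindex)
  from G_lin[OF fin this, of W]
  show ?thesis using assms(1) by (simp add: sum.reindex)
qed

lemma op2norm_cong: "(\<And>j. A 0 j = B 0 j) \<Longrightarrow> op2norm (Suc 0) q A = op2norm (Suc 0) q B"
  unfolding op2norm_1 by simp

theorem lemma2:
  fixes d :: nat and n :: "nat \<Rightarrow> nat" and rho :: "real \<Rightarrow> real"
    and Ws :: "nat \<Rightarrow> nat \<Rightarrow> nat \<Rightarrow> nat \<Rightarrow> real" and bs :: "nat \<Rightarrow> nat \<Rightarrow> nat \<Rightarrow> real"
    and X :: "(nat \<Rightarrow> real) set" and xs :: "nat \<Rightarrow> nat \<Rightarrow> real"
    and \<tau> :: nat and \<gamma> :: real and T :: "nat set" and t :: nat
    and x :: "nat \<Rightarrow> real" and c :: "nat \<Rightarrow> real"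
  assumes "1 \<le> d" and "n d = 1" and "rho = id \<or> rho = sigmoid"
    and "\<forall>s. xs s \<in> X"
    and "assumption1 rho n d Ws bs X \<tau> \<gamma>"
    and "finite T" and "T \<subseteq> {s. \<tau> \<le> s}" and "t \<in> T"
    and "\<forall>idx. valid_idx n d idx \<longrightarrow>
           actprod n d (Ws t) (bs t) x idx
           = (\<Sum>k\<in>T. c k * actprod n d (Ws k) (bs k) (xs k) idx)"
  shows "lip rho n d (Ws t) (bs t) x
         \<le> (1 + \<gamma>) * (\<Sum>k\<in>T. \<bar>c k\<bar>
               * (\<bar>S_out rho n d (Ws t) (bs t) x\<bar> / \<bar>S_out rho n d (Ws t) (bs t) (xs k)\<bar>)
               * lip rho n d (Ws k) (bs k) (xs k))"
proof -
  obtain L where dL: "d = Suc L" using assms(1) by (cases d) auto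
  define W where "W = Ws t"
  define b where "b = bs t"
  define D where "D z = (\<lambda>l i. S_hid n W b l z i)" for z
  define S where "S z = S_out rho n d W b z" for z
  have A1: "\<And>s s'. s \<in> T \<Longrightarrow> s' \<in> T \<Longrightarrow> \<forall>z\<in>X.
        (\<forall>idx. valid_idx n d idx \<longrightarrow>
            actprod n d (Ws s) (bs s) z idx = actprod n d (Ws s') (bs s') z idx) \<and>
        lip rho n d (Ws s) (bs s) z \<le> (1 + \<gamma>) * lip rho n d (Ws s') (bs s') z"
    using assms(5,7) unfolding assumption1_def by blast
  have ival: "{1..L} = {1..<d}" using dL by auto
  have hyp: "\<forall>idx. (\<forall>l'\<in>{1..L}. idx l' < n l') \<longrightarrow> (\<Prod>l'\<in>{1..L}. D x l' (idx l')) = (\<Sum>k\<in>T. c k * (\<Prod>l'\<in>{1..L}. D (xs k) l' (idx l')))"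
  proof (intro allI impI)
    fix idx assume "\<forall>l'\<in>{1..L}. idx l' < n l'"
    then have v: "valid_idx n d idx" unfolding valid_idx_def ival .
    have "actprod n d W b x idx = (\<Sum>k\<in>T. c k * actprod n d (Ws k) (bs k) (xs k) idx)"
      using assms(9) v unfolding W_def b_def by blast
    also have "\<dots> = (\<Sum>k\<in>T. c k * actprod n d W b (xs k) idx)"
      using A1[OF _ assms(8)] assms(4) v unfolding W_def b_def by (intro sum.cong) auto
    finally show "(\<Prod>l'\<in>{1..L}. D x l' (idx l')) = (\<Sum>k\<in>T. c k * (\<Prod>l'\<in>{1..L}. D (xs k) l' (idx l')))"
      unfolding actprod_def D_def ival .
  qed
  have G: "\<forall>i<n L. \<forall>j. G n W (D x) L i j = (\<Sum>k\<in>T. c k * G n W (D (xs k)) L i j)"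
    by (rule G_lin2[OF assms(6) hyp])
  have Snz: "S z \<noteq> 0" for z unfolding S_def using S_out_nz[OF assms(3)] .
  define a where "a k = c k * S x / S (xs k)" for k
  have J: "jac rho n d W b x d 0 j = (\<Sum>k\<in>T. a k * jac rho n d W b (xs k) d 0 j)" for j
  proof -
    have "jac rho n d W b x d 0 j = S x * (\<Sum>m<n L. W d 0 m * G n W (D x) L m j)"
      unfolding jac_d[OF dL] S_def D_def ..
    also have "\<dots> = S x * (\<Sum>m<n L. W d 0 m * (\<Sum>k\<in>T. c k * G n W (D (xs k)) L m j))"
      using G by simp
    also have "\<dots> = (\<Sum>k\<in>T. a k * (S (xs k) * (\<Sum>m<n L. W d 0 m * G n W (D (xs k)) L m j)))"
      unfolding a_def using Snz
      by (simp add: sum_distrib_left mult_ac sum.swap[of _ T])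
    also have "\<dots> = (\<Sum>k\<in>T. a k * jac rho n d W b (xs k) d 0 j)"
      unfolding jac_d[OF dL] S_def D_def ..
    finally show ?thesis .
  qed
  have "lip rho n d W b x = op2norm (Suc 0) (n 0) (\<lambda>i j. \<Sum>k\<in>T. a k * jac rho n d W b (xs k) d i j)"
    unfolding lip_def assms(2) One_nat_def using J by (intro op2norm_cong) simp
  also have "\<dots> \<le> (\<Sum>k\<in>T. \<bar>a k\<bar> * lip rho n d W b (xs k))"
    unfolding lip_def assms(2) One_nat_def by (rule op2norm_comb[OF assms(6)])
  also have "\<dots> \<le> (\<Sum>k\<in>T. \<bar>a k\<bar> * ((1 + \<gamma>) * lip rho n d (Ws k) (bs k) (xs k)))"
    using A1[OF assms(8)] assms(4) unfolding W_def b_def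
    by (intro sum_mono mult_left_mono) auto
  also have "\<dots> = (1 + \<gamma>) * (\<Sum>k\<in>T. \<bar>c k\<bar>
               * (\<bar>S x\<bar> / \<bar>S (xs k)\<bar>) * lip rho n d (Ws k) (bs k) (xs k))"
    unfolding a_def by (simp add: sum_distrib_left abs_mult mult_ac)
  finally show ?thesis unfolding W_def b_def S_def .
qed

end
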